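(* For all integers $m,n\ge 2$, we have $\operatorname{BSR}(m,n)\ge z_2(m,n)\ge z(m,n)$.
   Context: An $m\times n$ biquadratic form is a polynomial $P(\mathbf{x},\mathbf{y})=\sum_{i,k=1}^m\sum_{j,l=1}^n a_{ijkl}x_ix_ky_jy_l$ with real coefficients, $\mathbf{x}\in\mathbb{R}^m$, $\mathbf{y}\in\mathbb{R}^n$. It is SOS if $P=\sum_{p=1}^r f_p^2$ for some bilinear forms $f_p(\mathbf{x},\mathbf{y})=\sum_{i,j}c^{(p)}_{ij}x_iy_j$; the least such $r$ is the SOS rank $\operatorname{sos}(P)$. $\operatorname{BSR}(m,n)$ is the maximum of $\operatorname{sos}(P)$ over all $m\times n$ SOS biquadratic forms $P$. The Zarankiewicz number $z(m,n)$ is the maximum number of edges of a bipartite graph with parts $[m]=\{1,\dots,m\}$ and $[n]$ containing no 4-cycle $C_4$ (equivalently, the maximum size of a set of cells of the $m\times n$ grid containing no four cells $(i,j),(i,l),(k,j),(k,l)$ with $i\ne k$, $j\ne l$). Double Zarankiewicz number: consider configurations $G=([m],[n],E_1\cup E_2)$ where $E_1\subseteq[m]\times[n]$ is a set of 1-edges (cells) and $E_2$ is a set of 2-edges $(i,j;k,l)$ with $i,k\in[m]$, $j,l\in[n]$, $i\ne k$, $j\ne l$; the cells $(i,j)$ and $(k,l)$ are the two halves of this 2-edge. Simplicity condition: the halves of all 2-edges are pairwise distinct cells and none of them belongs to $E_1$. A cell is occupied if it lies in $E_1$ or is a half of some 2-edge. $G$ contains a generalized $C_4$-cycle if (1) there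 are four 1-edges $(i,j),(i,l),(k,j),(k,l)\in E_1$ with $i\ne k$, $j\ne l$; or (2) there is a 2-edge $(i,j;k,l)\in E_2$ whose two opposite cells $(i,l)$ and $(k,j)$ are both occupied; or (3) there are a 2-edge $(i,j;p,q)\in E_2$ and a cell $(k,l)$ such that the five cells $(k,l),(k,j),(k,q),(i,l),(p,l)$ are pairwise distinct and all occupied. $z_2(m,n)$ is the maximum of $|E_1|+|E_2|$ over all such $G$ satisfying the simplicity condition and containing no generalized $C_4$-cycle. *)

theory Defs
  imports Complex_Main
begin

text \<open>Vectors x in R^m are represented as functions nat => real, only the
  coordinates 1..m being used. A biquadratic form is given by its real
  coefficient array a i j k l, and is identified with the polynomial function
  it defines (over the infinite field R, polynomial identity is equivalent to
  identity of functions).\<close>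

definition biquad :: "nat \<Rightarrow> nat \<Rightarrow> (nat \<Rightarrow> nat \<Rightarrow> nat \<Rightarrow> nat \<Rightarrow> real)
    \<Rightarrow> (nat \<Rightarrow> real) \<Rightarrow> (nat \<Rightarrow> real) \<Rightarrow> real" where
  "biquad m n a x y =
     (\<Sum>i\<in>{1..m}. \<Sum>k\<in>{1..m}. \<Sum>j\<in>{1..n}. \<Sum>l\<in>{1..n}.
        a i j k l * x i * x k * y j * y l)"

definition bilin :: "nat \<Rightarrow> nat \<Rightarrow> (nat \<Rightarrow> nat \<Rightarrow> real)
    \<Rightarrow> (nat \<Rightarrow> real) \<Rightarrow> (nat \<Rightarrow> real) \<Rightarrow> real" where
  "bilin m n c x y = (\<Sum>i\<in>{1..m}. \<Sum>j\<in>{1..n}. c i j * x i * y j)"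

definition sos_with :: "nat \<Rightarrow> nat \<Rightarrow> (nat \<Rightarrow> nat \<Rightarrow> nat \<Rightarrow> nat \<Rightarrow> real) \<Rightarrow> nat \<Rightarrow> bool" where
  "sos_with m n a r \<longleftrightarrow>
     (\<exists>c :: nat \<Rightarrow> nat \<Rightarrow> nat \<Rightarrow> real. \<forall>x y.
        biquad m n a x y = (\<Sum>p\<in>{1..r}. (bilin m n (c p) x y)\<^sup>2))"

definition is_sos :: "nat \<Rightarrow> nat \<Rightarrow> (nat \<Rightarrow> nat \<Rightarrow> nat \<Rightarrow> nat \<Rightarrow> real) \<Rightarrow> bool" where
  "is_sos m n a \<longleftrightarrow> (\<exists>r. sos_with m n a r)"

definition sos_rank :: "nat \<Rightarrow> nat \<Rightarrow> (nat \<Rightarrow> nat \<Rightarrow> nat \<Rightarrow> nat \<Rightarrow> real) \<Rightarrow> nat" where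
  "sos_rank m n a = (LEAST r. sos_with m n a r)"

text \<open>BSR(m,n): maximum SOS rank over all SOS m x n biquadratic forms
  (the set is nonempty and bounded, so Sup is its maximum).\<close>
definition BSR :: "nat \<Rightarrow> nat \<Rightarrow> nat" where
  "BSR m n = Sup {sos_rank m n a | a. is_sos m n a}"

definition grid :: "nat \<Rightarrow> nat \<Rightarrow> (nat \<times> nat) set" where
  "grid m n = {1..m} \<times> {1..n}"

definition C4_free :: "(nat \<times> nat) set \<Rightarrow> bool" where
  "C4_free E \<longleftrightarrow> \<not> (\<exists>i j k l. i \<noteq> k \<and> j \<noteq> l \<and>
      (i,j) \<in> E \<and> (i,l) \<in> E \<and> (k,j) \<in> E \<and> (k,l) \<in> E)"

definition zaran :: "nat \<Rightarrow> nat \<Rightarrow> nat" where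
  "zaran m n = Max {card E | E. E \<subseteq> grid m n \<and> C4_free E}"

text \<open>Double configurations: E1 a set of cells, E2 a set of 2-edges
  ((i,j),(k,l)) representing (i,j;k,l).\<close>
definition occupied :: "(nat \<times> nat) set \<Rightarrow> ((nat \<times> nat) \<times> (nat \<times> nat)) set
    \<Rightarrow> nat \<times> nat \<Rightarrow> bool" where
  "occupied E1 E2 c \<longleftrightarrow> c \<in> E1 \<or> (\<exists>e\<in>E2. c = fst e \<or> c = snd e)"

definition double_config :: "nat \<Rightarrow> nat \<Rightarrow> (nat \<times> nat) set
    \<Rightarrow> ((nat \<times> nat) \<times> (nat \<times> nat)) set \<Rightarrow> bool" where
  "double_config m n E1 E2 \<longleftrightarrow>
     E1 \<subseteq> grid m n \<and>
     (\<forall>((i,j),(k,l))\<in>E2. (i,j) \<in> grid m n \<and> (k,l) \<in> grid m n \<and> i \<noteq> k \<and> j \<noteq> l)"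

definition simple_config :: "(nat \<times> nat) set
    \<Rightarrow> ((nat \<times> nat) \<times> (nat \<times> nat)) set \<Rightarrow> bool" where
  "simple_config E1 E2 \<longleftrightarrow>
     (\<forall>e\<in>E2. \<forall>e'\<in>E2. e \<noteq> e' \<longrightarrow> {fst e, snd e} \<inter> {fst e', snd e'} = {}) \<and>
     (\<forall>e\<in>E2. fst e \<notin> E1 \<and> snd e \<notin> E1)"

definition has_gen_C4 :: "(nat \<times> nat) set
    \<Rightarrow> ((nat \<times> nat) \<times> (nat \<times> nat)) set \<Rightarrow> bool" where
  "has_gen_C4 E1 E2 \<longleftrightarrow>
     \<not> C4_free E1 \<or>
     (\<exists>i j k l. ((i,j),(k,l)) \<in> E2 \<and> occupied E1 E2 (i,l) \<and> occupied E1 E2 (k,j)) \<or>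
     (\<exists>i j p q k l. ((i,j),(p,q)) \<in> E2 \<and>
        distinct [(k,l),(k,j),(k,q),(i,l),(p,l)] \<and>
        occupied E1 E2 (k,l) \<and> occupied E1 E2 (k,j) \<and> occupied E1 E2 (k,q) \<and>
        occupied E1 E2 (i,l) \<and> occupied E1 E2 (p,l))"

definition zaran2 :: "nat \<Rightarrow> nat \<Rightarrow> nat" where
  "zaran2 m n = Max {card E1 + card E2 | E1 E2.
      double_config m n E1 E2 \<and> simple_config E1 E2 \<and> \<not> has_gen_C4 E1 E2}"

end

theory Submission
  imports Defs
begin

definition pt :: "nat \<Rightarrow> nat \<Rightarrow> real \<Rightarrow> nat \<Rightarrow> real" where
  "pt i k s u = (if u = i then 1 else 0) + (if u = k then s else 0)"

definition Gr :: "(nat \<Rightarrow> nat \<Rightarrow> nat \<Rightarrow> real) \<Rightarrow> nat \<Rightarrow> nat \<times> nat \<Rightarrow> nat \<times> nat \<Rightarrow> real" where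
  "Gr c r u v = (\<Sum>p\<in>{1..r}. c p (fst u) (snd u) * c p (fst v) (snd v))"

definition SQ where
  "SQ m n c r x y = (\<Sum>p\<in>{1..r}. (bilin m n (c p) x y)\<^sup>2)"

lemma sum_pt: "finite A \<Longrightarrow> i \<in> A \<Longrightarrow> k \<in> A \<Longrightarrow>
   (\<Sum>u\<in>A. f u * pt i k s u) = f i + s * f k"
  by (simp add: pt_def distrib_left sum.distrib if_distrib[of "\<lambda>z. f _ * z"] sum.If_cases
      algebra_simps cong: if_cong)

lemma bilin_pt:
  assumes "i \<in> {1..m}" "k \<in> {1..m}" "j \<in> {1..n}" "l \<in> {1..n}"
  shows "bilin m n c (pt i k s) (pt j l t) = c i j + t * c i l + s * c k j + s * t * c k l"
proof -
  have "bilin m n c (pt i k s) (pt j l t) = (\<Sum>u\<in>{1..m}. (\<Sum>v\<in>{1..n}. c u v * pt j l t v) * pt i k s u)"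
    unfolding bilin_def by (simp add: sum_distrib_right sum_distrib_left mult.commute mult.left_commute)
  also have "\<dots> = (\<Sum>v\<in>{1..n}. c i v * pt j l t v) + s * (\<Sum>v\<in>{1..n}. c k v * pt j l t v)"
    using assms by (subst sum_pt) auto
  also have "\<dots> = c i j + t * c i l + s * c k j + s * t * c k l"
    using assms by (simp add: sum_pt algebra_simps)
  finally show ?thesis .
qed

lemma SQ_pt:
  assumes "i \<in> {1..m}" "k \<in> {1..m}" "j \<in> {1..n}" "l \<in> {1..n}"
  shows "SQ m n c r (pt i k s) (pt j l t) = (\<Sum>p\<in>{1..r}. (c p i j + t * c p i l + s * c p k j + s * t * c p k l)\<^sup>2)"
  unfolding SQ_def using assms by (simp add: bilin_pt)

lemma SQ_diag:
  assumes "i \<in> {1..m}" "j \<in> {1..n}"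
  shows "SQ m n c r (pt i i 0) (pt j j 0) = Gr c r (i,j) (i,j)"
  using assms by (simp add: SQ_pt Gr_def power2_eq_square)

lemma SQ_row:
  assumes "i \<in> {1..m}" "j \<in> {1..n}" "l \<in> {1..n}"
  shows "SQ m n c r (pt i i 0) (pt j l 1) - SQ m n c r (pt i i 0) (pt j l (-1)) = 4 * Gr c r (i,j) (i,l)"
  using assms by (simp add: SQ_pt Gr_def power2_eq_square sum_subtractf[symmetric] sum_distrib_left algebra_simps)

lemma SQ_col:
  assumes "i \<in> {1..m}" "k \<in> {1..m}" "j \<in> {1..n}"
  shows "SQ m n c r (pt i k 1) (pt j j 0) - SQ m n c r (pt i k (-1)) (pt j j 0) = 4 * Gr c r (i,j) (k,j)"
  using assms by (simp add: SQ_pt Gr_def power2_eq_square sum_subtractf[symmetric] sum_distrib_left algebra_simps)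

lemma SQ_cross:
  assumes "i \<in> {1..m}" "k \<in> {1..m}" "j \<in> {1..n}" "l \<in> {1..n}"
  shows "SQ m n c r (pt i k 1) (pt j l 1) - SQ m n c r (pt i k 1) (pt j l (-1))
       - SQ m n c r (pt i k (-1)) (pt j l 1) + SQ m n c r (pt i k (-1)) (pt j l (-1))
     = 8 * (Gr c r (i,j) (k,l) + Gr c r (k,j) (i,l))"
  using assms by (simp add: SQ_pt Gr_def power2_eq_square sum_subtractf[symmetric] sum.distrib[symmetric] sum_distrib_left algebra_simps)

lemma ortho_card:
  fixes v :: "'a \<Rightarrow> nat \<Rightarrow> real"
  assumes fin: "finite R"
    and on: "\<And>q q'. q \<in> R \<Longrightarrow> q' \<in> R \<Longrightarrow> (\<Sum>p\<in>{1..r}. v q p * v q' p) = (if q = q' then 1 else 0)"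
  shows "card R \<le> r"
proof -
  define P where "P p p' = (\<Sum>q\<in>R. v q p * v q p')" for p p'
  have tr: "(\<Sum>p\<in>{1..r}. P p p) = real (card R)"
  proof -
    have "(\<Sum>p\<in>{1..r}. P p p) = (\<Sum>q\<in>R. \<Sum>p\<in>{1..r}. v q p * v q p)"
      unfolding P_def by (rule sum.swap)
    also have "\<dots> = (\<Sum>q\<in>R. 1)" using on by simp
    finally show ?thesis by simp
  qed
  have idem: "(\<Sum>p'\<in>{1..r}. P p p' * P p' p) = P p p" for p
  proof -
    have "(\<Sum>p'\<in>{1..r}. P p p' * P p' p)
        = (\<Sum>p'\<in>{1..r}. \<Sum>q\<in>R. \<Sum>q'\<in>R. (v q p * v q' p) * (v q p' * v q' p'))"
      unfolding P_def by (simp add: sum_distrib_left sum_distrib_right algebra_simps)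
    also have "\<dots> = (\<Sum>q\<in>R. \<Sum>q'\<in>R. \<Sum>p'\<in>{1..r}. (v q p * v q' p) * (v q p' * v q' p'))"
    proof -
      have "(\<Sum>p'\<in>{1..r}. \<Sum>q\<in>R. \<Sum>q'\<in>R. (v q p * v q' p) * (v q p' * v q' p'))
        = (\<Sum>q\<in>R. \<Sum>p'\<in>{1..r}. \<Sum>q'\<in>R. (v q p * v q' p) * (v q p' * v q' p'))"
        by (rule sum.swap)
      also have "\<dots> = (\<Sum>q\<in>R. \<Sum>q'\<in>R. \<Sum>p'\<in>{1..r}. (v q p * v q' p) * (v q p' * v q' p'))"
        by (rule sum.cong[OF refl], rule sum.swap)
      finally show ?thesis .
    qed
    also have "\<dots> = (\<Sum>q\<in>R. \<Sum>q'\<in>R. (v q p * v q' p) * (if q = q' then 1 else 0))"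
      by (intro sum.cong refl) (simp only: sum_distrib_left[symmetric] on)
    also have "\<dots> = P p p" unfolding P_def using fin by (simp add: if_distrib cong: if_cong)
    finally show ?thesis .
  qed
  have le1: "P p p \<le> 1" if "p \<in> {1..r}" for p
  proof -
    have "P p p * P p p \<le> (\<Sum>p'\<in>{1..r}. P p p' * P p' p)"
    proof -
      have sym: "P p' p = P p p'" for p' unfolding P_def by (simp add: mult.commute)
      have "(\<Sum>p'\<in>{1..r}. P p p' * P p' p) = (\<Sum>p'\<in>{1..r}. (P p p')\<^sup>2)"
        by (simp add: sym power2_eq_square)
      moreover have "(P p p)\<^sup>2 \<le> (\<Sum>p'\<in>{1..r}. (P p p')\<^sup>2)"
        using that by (intro member_le_sum) auto
      ultimately show ?thesis by (simp add: power2_eq_square)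
    qed
    then have "P p p * P p p \<le> P p p" using idem by simp
    moreover have "P p p \<ge> 0" unfolding P_def by (intro sum_nonneg) simp
    ultimately show ?thesis
      by (metis mult_le_cancel_left2 mult_cancel_right1 order_le_less not_less)
  qed
  have "(\<Sum>p\<in>{1..r}. P p p) \<le> (\<Sum>p\<in>{1..r}. 1)" by (intro sum_mono le1)
  with tr show ?thesis by simp
qed

lemma sum_Suc_last: "(\<Sum>p\<in>{1..Suc N}. h p) = (\<Sum>p\<in>{1..N}. h p) + h (Suc N)"
  by simp

lemma extend_forms:
  fixes g :: "nat \<Rightarrow> 'a \<Rightarrow> real" and e w :: "'a \<Rightarrow> real"
  assumes fin: "finite S" and t0: "t0 \<notin> S"
  shows "(\<Sum>p\<in>{1..card S}. (\<Sum>t\<in>S. g p t * w t)\<^sup>2) + (\<Sum>t\<in>insert t0 S. e t * w t)\<^sup>2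
     = (\<Sum>p\<in>{1..card (insert t0 S)}.
          (\<Sum>t\<in>insert t0 S. (if p \<le> card S then (if t = t0 then 0 else g p t) else e t) * w t)\<^sup>2)"
proof -
  let ?g = "\<lambda>p t. (if p \<le> card S then (if t = t0 then 0 else g p t) else e t)"
  have c: "card (insert t0 S) = Suc (card S)" using fin t0 by simp
  have a: "(\<Sum>t\<in>insert t0 S. ?g p t * w t) = (\<Sum>t\<in>S. g p t * w t)" if "p \<le> card S" for p
  proof -
    have "(\<Sum>t\<in>insert t0 S. ?g p t * w t) = (\<Sum>t\<in>S. ?g p t * w t)"
      using fin t0 that by (subst sum.insert) auto
    also have "\<dots> = (\<Sum>t\<in>S. g p t * w t)" using t0 that by (intro sum.cong) auto
    finally show ?thesis .
  qed
  have b: "(\<Sum>p\<in>{1..card S}. (\<Sum>t\<in>S. g p t * w t)\<^sup>2) = (\<Sum>p\<in>{1..card S}. (\<Sum>t\<in>insert t0 S. ?g p t * w t)\<^sup>2)"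
    by (rule sum.cong[OF refl]) (subst a, auto)
  have d: "(\<Sum>t\<in>insert t0 S. ?g (Suc (card S)) t * w t) = (\<Sum>t\<in>insert t0 S. e t * w t)"
    by simp
  show ?thesis unfolding c sum_Suc_last b d ..
qed

lemma sos_reduce:
  fixes f :: "nat \<Rightarrow> 'a \<Rightarrow> real"
  assumes "finite S"
  shows "\<exists>g. \<forall>w. (\<Sum>p\<in>{1..r}. (\<Sum>t\<in>S. f p t * w t)\<^sup>2) = (\<Sum>p\<in>{1..card S}. (\<Sum>t\<in>S. g p t * w t)\<^sup>2)"
  using assms
proof (induction S arbitrary: f rule: finite_induct)
  case empty
  then show ?case by simp
next
  case (insert t0 S)
  define a where "a = (\<Sum>p\<in>{1..r}. (f p t0)\<^sup>2)"
  have a0: "a \<ge> 0" unfolding a_def by (intro sum_nonneg) simp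
  show ?case
  proof (cases "a = 0")
    case True
    have z: "f p t0 = 0" if "p \<in> {1..r}" for p
      using True unfolding a_def
      by (subst (asm) sum_nonneg_eq_0_iff) (use that in auto)
    obtain g where g: "\<forall>w. (\<Sum>p\<in>{1..r}. (\<Sum>t\<in>S. f p t * w t)\<^sup>2) = (\<Sum>p\<in>{1..card S}. (\<Sum>t\<in>S. g p t * w t)\<^sup>2)"
      using insert.IH by blast
    let ?g = "\<lambda>p t. (if p \<le> card S then (if t = t0 then 0 else g p t) else (0::real))"
    show ?thesis
    proof (intro exI allI)
      fix w :: "'a \<Rightarrow> real"
      have "(\<Sum>p\<in>{1..r}. (\<Sum>t\<in>insert t0 S. f p t * w t)\<^sup>2) = (\<Sum>p\<in>{1..r}. (\<Sum>t\<in>S. f p t * w t)\<^sup>2)"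
        using insert.hyps z by (intro sum.cong) (auto simp: sum.insert)
      also have "\<dots> = (\<Sum>p\<in>{1..card S}. (\<Sum>t\<in>S. g p t * w t)\<^sup>2) + (\<Sum>t\<in>insert t0 S. (\<lambda>_. 0) t * w t)\<^sup>2"
        using g by simp
      also have "\<dots> = (\<Sum>p\<in>{1..card (insert t0 S)}. (\<Sum>t\<in>insert t0 S. ?g p t * w t)\<^sup>2)"
        by (rule extend_forms[OF insert.hyps])
      finally show "(\<Sum>p\<in>{1..r}. (\<Sum>t\<in>insert t0 S. f p t * w t)\<^sup>2) = (\<Sum>p\<in>{1..card (insert t0 S)}. (\<Sum>t\<in>insert t0 S. ?g p t * w t)\<^sup>2)" .
    qed
  next
    case False
    with a0 have apos: "a > 0" by simp
    define d where "d t = (\<Sum>q\<in>{1..r}. f q t0 * f q t)" for t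
    define f' where "f' p t = f p t - f p t0 * d t / a" for p t
    have f't0: "f' p t0 = 0" for p
      unfolding f'_def d_def a_def using apos a_def by (simp add: power2_eq_square)
    obtain g where g: "\<forall>w. (\<Sum>p\<in>{1..r}. (\<Sum>t\<in>S. f' p t * w t)\<^sup>2) = (\<Sum>p\<in>{1..card S}. (\<Sum>t\<in>S. g p t * w t)\<^sup>2)"
      using insert.IH by blast
    let ?e = "\<lambda>t. d t / sqrt a"
    let ?g = "\<lambda>p t. (if p \<le> card S then (if t = t0 then 0 else g p t) else ?e t)"
    show ?thesis
    proof (intro exI allI)
      fix w :: "'a \<Rightarrow> real"
      define F where "F p = (\<Sum>t\<in>insert t0 S. f p t * w t)" for p
      define h where "h = (\<Sum>q\<in>{1..r}. f q t0 * F q) / a"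
      have hd0: "(\<Sum>t\<in>insert t0 S. d t * w t) = (\<Sum>q\<in>{1..r}. f q t0 * F q)"
        unfolding F_def d_def
        by (simp add: sum_distrib_left sum_distrib_right sum.swap[of _ "insert t0 S"] algebra_simps)
      have hd: "(\<Sum>t\<in>insert t0 S. d t * w t) = a * h"
        using apos unfolding hd0 h_def by simp
      have F': "(\<Sum>t\<in>S. f' p t * w t) = F p - f p t0 * h" for p
      proof -
        have "(\<Sum>t\<in>S. f' p t * w t) = (\<Sum>t\<in>insert t0 S. f' p t * w t)"
          using insert.hyps f't0 by (simp add: sum.insert)
        also have "\<dots> = F p - f p t0 / a * (\<Sum>t\<in>insert t0 S. d t * w t)"
          unfolding f'_def F_def
          by (simp add: sum_subtractf sum_distrib_left algebra_simps)
        also have "\<dots> = F p - f p t0 * h" using hd apos by simp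
        finally show ?thesis .
      qed
      have sq: "(\<Sum>t\<in>insert t0 S. ?e t * w t)\<^sup>2 = a * h\<^sup>2"
      proof -
        have "(\<Sum>t\<in>insert t0 S. ?e t * w t) = (\<Sum>t\<in>insert t0 S. d t * w t) / sqrt a"
          by (simp add: sum_divide_distrib)
        then show ?thesis using hd apos by (simp add: power_divide power_mult_distrib power2_eq_square)
      qed
      have key: "(\<Sum>p\<in>{1..r}. (F p)\<^sup>2) = a * h\<^sup>2 + (\<Sum>p\<in>{1..r}. (F p - f p t0 * h)\<^sup>2)"
      proof -
        have ha: "(\<Sum>p\<in>{1..r}. f p t0 * F p) = a * h" unfolding h_def using apos by simp
        have "(\<Sum>p\<in>{1..r}. (F p - f p t0 * h)\<^sup>2)
            = (\<Sum>p\<in>{1..r}. (F p)\<^sup>2) - 2 * h * (\<Sum>p\<in>{1..r}. f p t0 * F p) + h\<^sup>2 * a"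
          unfolding a_def
          by (simp add: power2_diff sum_subtractf sum.distrib sum_distrib_left algebra_simps power_mult_distrib)
        then show ?thesis using ha by (simp add: power2_eq_square algebra_simps)
      qed
      have "(\<Sum>p\<in>{1..r}. (F p)\<^sup>2) = (\<Sum>p\<in>{1..card S}. (\<Sum>t\<in>S. g p t * w t)\<^sup>2) + (\<Sum>t\<in>insert t0 S. ?e t * w t)\<^sup>2"
        using key g[rule_format, of w] F' sq by simp
      also have "\<dots> = (\<Sum>p\<in>{1..card (insert t0 S)}. (\<Sum>t\<in>insert t0 S. ?g p t * w t)\<^sup>2)"
        by (rule extend_forms[OF insert.hyps])
      finally show "(\<Sum>p\<in>{1..r}. (\<Sum>t\<in>insert t0 S. f p t * w t)\<^sup>2) = (\<Sum>p\<in>{1..card (insert t0 S)}. (\<Sum>t\<in>insert t0 S. ?g p t * w t)\<^sup>2)"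
        unfolding F_def .
    qed
  qed
qed

definition gram_arr :: "(nat \<Rightarrow> nat \<Rightarrow> nat \<Rightarrow> real) \<Rightarrow> nat \<Rightarrow> nat \<Rightarrow> nat \<Rightarrow> nat \<Rightarrow> nat \<Rightarrow> real" where
  "gram_arr c r i j k l = (\<Sum>p\<in>{1..r}. c p i j * c p k l)"

lemma biquad_gram: "biquad m n (gram_arr c r) x y = (\<Sum>p\<in>{1..r}. (bilin m n (c p) x y)\<^sup>2)"
proof -
  have "(\<Sum>p\<in>{1..r}. (bilin m n (c p) x y)\<^sup>2)
     = (\<Sum>p\<in>{1..r}. \<Sum>i\<in>{1..m}. \<Sum>k\<in>{1..m}. \<Sum>j\<in>{1..n}. \<Sum>l\<in>{1..n}.
          c p i j * c p k l * x i * x k * y j * y l)"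
  proof (rule sum.cong[OF refl])
    fix p
    show "(bilin m n (c p) x y)\<^sup>2 = (\<Sum>i\<in>{1..m}. \<Sum>k\<in>{1..m}. \<Sum>j\<in>{1..n}. \<Sum>l\<in>{1..n}.
          c p i j * c p k l * x i * x k * y j * y l)"
      unfolding bilin_def power2_eq_square sum_product
      by (simp add: sum_distrib_left sum_distrib_right algebra_simps)
  qed
  also have "\<dots> = (\<Sum>i\<in>{1..m}. \<Sum>p\<in>{1..r}. \<Sum>k\<in>{1..m}. \<Sum>j\<in>{1..n}. \<Sum>l\<in>{1..n}.
          c p i j * c p k l * x i * x k * y j * y l)" by (rule sum.swap)
  also have "\<dots> = (\<Sum>i\<in>{1..m}. \<Sum>k\<in>{1..m}. \<Sum>p\<in>{1..r}. \<Sum>j\<in>{1..n}. \<Sum>l\<in>{1..n}.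
          c p i j * c p k l * x i * x k * y j * y l)" by (rule sum.cong[OF refl], rule sum.swap)
  also have "\<dots> = (\<Sum>i\<in>{1..m}. \<Sum>k\<in>{1..m}. \<Sum>j\<in>{1..n}. \<Sum>p\<in>{1..r}. \<Sum>l\<in>{1..n}.
          c p i j * c p k l * x i * x k * y j * y l)" by (rule sum.cong[OF refl], rule sum.cong[OF refl], rule sum.swap)
  also have "\<dots> = (\<Sum>i\<in>{1..m}. \<Sum>k\<in>{1..m}. \<Sum>j\<in>{1..n}. \<Sum>l\<in>{1..n}. \<Sum>p\<in>{1..r}.
          c p i j * c p k l * x i * x k * y j * y l)"
    by (rule sum.cong[OF refl], rule sum.cong[OF refl], rule sum.cong[OF refl], rule sum.swap)
  also have "\<dots> = biquad m n (gram_arr c r) x y"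
    unfolding biquad_def gram_arr_def by (simp add: sum_distrib_right)
  finally show ?thesis by simp
qed

lemma sos_with_gram: "sos_with m n (gram_arr c r) r"
  unfolding sos_with_def using biquad_gram by blast

lemma bilin_cart: "bilin m n c x y = (\<Sum>t\<in>grid m n. c (fst t) (snd t) * (x (fst t) * y (snd t)))"
  unfolding bilin_def grid_def by (simp add: sum.cartesian_product algebra_simps case_prod_beta)

lemma card_grid: "card (grid m n) = m * n" unfolding grid_def by (simp add: card_cartesian_product)
lemma finite_grid: "finite (grid m n)" unfolding grid_def by simp

lemma sos_with_mn:
  assumes "sos_with m n a r" shows "sos_with m n a (m * n)"
proof -
  obtain c where c: "\<forall>x y. biquad m n a x y = (\<Sum>p\<in>{1..r}. (bilin m n (c p) x y)\<^sup>2)"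
    using assms unfolding sos_with_def by blast
  obtain g where g: "\<forall>w. (\<Sum>p\<in>{1..r}. (\<Sum>t\<in>grid m n. c p (fst t) (snd t) * w t)\<^sup>2)
     = (\<Sum>p\<in>{1..card (grid m n)}. (\<Sum>t\<in>grid m n. g p t * w t)\<^sup>2)"
    using sos_reduce[OF finite_grid, where f="\<lambda>p t. c p (fst t) (snd t)" and r=r] by blast
  define c' where "c' p i j = g p (i, j)" for p i j
  have "biquad m n a x y = (\<Sum>p\<in>{1..m*n}. (bilin m n (c' p) x y)\<^sup>2)" for x y
  proof -
    have "biquad m n a x y = (\<Sum>p\<in>{1..r}. (\<Sum>t\<in>grid m n. c p (fst t) (snd t) * (x (fst t) * y (snd t)))\<^sup>2)"
      using c by (simp add: bilin_cart)
    also have "\<dots> = (\<Sum>p\<in>{1..card (grid m n)}. (\<Sum>t\<in>grid m n. g p t * (x (fst t) * y (snd t)))\<^sup>2)"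
      by (rule g[rule_format])
    also have "\<dots> = (\<Sum>p\<in>{1..m*n}. (bilin m n (c' p) x y)\<^sup>2)"
      unfolding card_grid bilin_cart c'_def by simp
    finally show ?thesis .
  qed
  then show ?thesis unfolding sos_with_def by blast
qed

lemma sos_rank_le: "is_sos m n a \<Longrightarrow> sos_rank m n a \<le> m * n"
  unfolding is_sos_def sos_rank_def by (metis sos_with_mn Least_le)

lemma BSR_ge: "is_sos m n a \<Longrightarrow> sos_rank m n a \<le> BSR m n"
proof -
  assume a: "is_sos m n a"
  let ?X = "{sos_rank m n a | a. is_sos m n a}"
  have fin: "finite ?X" by (rule finite_subset[of _ "{..m*n}"]) (auto intro: sos_rank_le)
  have "sos_rank m n a \<in> ?X" using a by blast
  then show ?thesis unfolding BSR_def using fin by (simp add: le_cSup_finite)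
qed

locale cfg =
  fixes m n :: nat and E1 :: "(nat \<times> nat) set" and E2 :: "((nat \<times> nat) \<times> (nat \<times> nat)) set"
  assumes dc: "double_config m n E1 E2" and sc: "simple_config E1 E2" and nc: "\<not> has_gen_C4 E1 E2"
begin

abbreviation occ where "occ \<equiv> occupied E1 E2"

definition same where "same u v \<longleftrightarrow> (u = v \<and> occ u) \<or> (u, v) \<in> E2 \<or> (v, u) \<in> E2"

definition Rp where "Rp = E1 \<union> fst ` E2"

lemma E1_grid: "u \<in> E1 \<Longrightarrow> u \<in> grid m n"
  using dc unfolding double_config_def by blast

lemma E2_props: assumes "(u, v) \<in> E2"
  shows "u \<in> grid m n" "v \<in> grid m n" "fst u \<noteq> fst v" "snd u \<noteq> snd v"
proof -
  obtain a b c d where uv: "u = (a, b)" "v = (c, d)" by (cases u, cases v) auto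
  have "(a, b) \<in> grid m n \<and> (c, d) \<in> grid m n \<and> a \<noteq> c \<and> b \<noteq> d"
    using dc assms unfolding double_config_def uv by fast
  then show "u \<in> grid m n" "v \<in> grid m n" "fst u \<noteq> fst v" "snd u \<noteq> snd v" using uv by auto
qed

lemma E2_disj: "e \<in> E2 \<Longrightarrow> e' \<in> E2 \<Longrightarrow> e \<noteq> e' \<Longrightarrow> {fst e, snd e} \<inter> {fst e', snd e'} = {}"
  using sc unfolding simple_config_def by blast

lemma E2_notE1: "(u, v) \<in> E2 \<Longrightarrow> u \<notin> E1 \<and> v \<notin> E1"
  using sc unfolding simple_config_def by force

lemma occ_iff: "occ w \<longleftrightarrow> w \<in> E1 \<or> (\<exists>v. (w, v) \<in> E2) \<or> (\<exists>v. (v, w) \<in> E2)"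
  unfolding occupied_def by force

lemma occ_grid: "occ w \<Longrightarrow> w \<in> grid m n"
  using occ_iff E1_grid E2_props by blast

lemma c4: "C4_free E1" using nc unfolding has_gen_C4_def by blast

lemma no2: "((i,j),(k,l)) \<in> E2 \<Longrightarrow> occ (i,l) \<Longrightarrow> occ (k,j) \<Longrightarrow> False"
  using nc unfolding has_gen_C4_def by blast

lemma no3: "((i,j),(p,q)) \<in> E2 \<Longrightarrow> distinct [(k,l),(k,j),(k,q),(i,l),(p,l)] \<Longrightarrow>
   occ (k,l) \<Longrightarrow> occ (k,j) \<Longrightarrow> occ (k,q) \<Longrightarrow> occ (i,l) \<Longrightarrow> occ (p,l) \<Longrightarrow> False"
  using nc unfolding has_gen_C4_def by blast

lemma E2_neq: "(u, v) \<in> E2 \<Longrightarrow> u \<noteq> v"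
  using E2_props(3) by blast

lemma uniq1: "(a, b) \<in> E2 \<Longrightarrow> (a, b') \<in> E2 \<Longrightarrow> b = b'"
  using E2_disj[of "(a,b)" "(a,b')"] by auto
lemma uniq2: "(a, b) \<in> E2 \<Longrightarrow> (a', b) \<in> E2 \<Longrightarrow> a = a'"
  using E2_disj[of "(a,b)" "(a',b)"] by auto
lemma uniq3: "(a, b) \<in> E2 \<Longrightarrow> (b, c) \<notin> E2"
  using E2_disj[of "(a,b)" "(b,c)"] E2_neq by auto
lemma uniq4: "(a, b) \<in> E2 \<Longrightarrow> (c, a) \<notin> E2"
  using uniq3 by blast

lemma occ_fst: "(w, v) \<in> E2 \<Longrightarrow> occ w"
  unfolding occupied_def by (rule disjI2, rule bexI[of _ "(w, v)"]) auto
lemma occ_snd: "(v, w) \<in> E2 \<Longrightarrow> occ w"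
  unfolding occupied_def by (rule disjI2, rule bexI[of _ "(v, w)"]) auto

lemma same_occ: "same u v \<Longrightarrow> occ u \<and> occ v"
  unfolding same_def using occ_fst occ_snd by blast

lemma same_sym: "same u v = same v u" unfolding same_def by blast

lemma snd_notRp: assumes "(a, b) \<in> E2" shows "b \<notin> Rp"
proof
  assume "b \<in> Rp"
  then consider "b \<in> E1" | e where "e \<in> E2" "b = fst e" unfolding Rp_def by blast
  then show False
  proof cases
    case 1 then show False using E2_notE1[OF assms] by simp
  next
    case 2
    then have "(b, snd e) \<in> E2" by simp
    then show False using uniq3[OF assms] by simp
  qed
qed

lemma Rp_occ: "q \<in> Rp \<Longrightarrow> occ q"
  unfolding Rp_def using occ_fst[of "fst e" "snd e" for e] by (auto simp: occupied_def)

lemma same_Rp: assumes "q \<in> Rp" shows "same q u \<longleftrightarrow> u = q \<or> (q, u) \<in> E2"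
proof -
  have "(u, q) \<notin> E2" using snd_notRp[of u q] assms by auto
  then show ?thesis unfolding same_def using Rp_occ[OF assms] by auto
qed

lemma finE1: "finite E1"
proof -
  have "E1 \<subseteq> grid m n" using E1_grid by blast
  then show ?thesis by (rule finite_subset) (rule finite_grid)
qed
lemma finE2: "finite E2"
proof -
  have "E2 \<subseteq> grid m n \<times> grid m n" using E2_props by auto
  then show ?thesis using finite_grid finite_subset by blast
qed
lemma finRp: "finite Rp" unfolding Rp_def using finE1 finE2 by simp

lemma card_Rp: "card Rp = card E1 + card E2"
proof -
  have "E1 \<inter> fst ` E2 = {}"
  proof (rule ccontr)
    assume "E1 \<inter> fst ` E2 \<noteq> {}"
    then obtain e where "e \<in> E2" "fst e \<in> E1" by blast
    then show False using E2_notE1[of "fst e" "snd e"] by simp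
  qed
  moreover have "inj_on fst E2"
  proof (rule inj_onI)
    fix e e' assume "e \<in> E2" "e' \<in> E2" "fst e = fst e'"
    have 1: "(fst e, snd e) \<in> E2" using \<open>e \<in> E2\<close> by simp
    have 2: "(fst e, snd e') \<in> E2" using \<open>e' \<in> E2\<close> \<open>fst e = fst e'\<close> by simp
    have "snd e = snd e'" by (rule uniq1[OF 1 2])
    then show "e = e'" using \<open>fst e = fst e'\<close> by (simp add: prod_eq_iff)
  qed
  ultimately show ?thesis unfolding Rp_def using finE1 finE2
    by (simp only: card_Un_disjoint card_image finite_imageI)
qed

lemma G0_sum: "(\<Sum>q\<in>Rp. of_bool (same q u) * of_bool (same q v)) = (of_bool (same u v) :: real)"
proof -
  let ?A = "Rp \<inter> {q. same q u \<and> same q v}"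
  have "(\<Sum>q\<in>Rp. of_bool (same q u) * of_bool (same q v)) = (\<Sum>q\<in>Rp. (of_bool (same q u \<and> same q v) :: real))"
    by (intro sum.cong) auto
  also have "\<dots> = real (card ?A)" using finRp by simp
  also have "\<dots> = of_bool (same u v)"
  proof -
    have one: "q = q'" if "q \<in> ?A" "q' \<in> ?A" for q q'
    proof -
      have q: "q \<in> Rp" "u = q \<or> (q, u) \<in> E2" using that(1) same_Rp[of q u] by auto
      have q': "q' \<in> Rp" "u = q' \<or> (q', u) \<in> E2" using that(2) same_Rp[of q' u] by auto
      show ?thesis
      proof (cases "u = q")
        case True
        then have "(q', u) \<notin> E2" using snd_notRp[of q' u] q(1) by auto
        then show ?thesis using q' True by auto
      next
        case False
        then have e: "(q, u) \<in> E2" using q by auto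
        then have "u \<noteq> q'" using snd_notRp[of q u] q'(1) by auto
        then have "(q', u) \<in> E2" using q' by auto
        then show ?thesis using uniq2[OF e] by auto
      qed
    qed
    have ne: "?A \<noteq> {} \<longleftrightarrow> same u v"
    proof
      assume "?A \<noteq> {}"
      then obtain q where q: "q \<in> Rp" "same q u" "same q v" by blast
      then have "(u = q \<or> (q, u) \<in> E2) \<and> (v = q \<or> (q, v) \<in> E2)" using same_Rp by blast
      then show "same u v" unfolding same_def using Rp_occ[OF q(1)] occ_iff uniq1 by blast
    next
      assume s: "same u v"
      have "\<exists>q\<in>Rp. same q u \<and> same q v"
      proof -
        have "(u = v \<and> occ u) \<or> (u, v) \<in> E2 \<or> (v, u) \<in> E2" using s same_def by blast
        then show ?thesis
        proof (elim disjE conjE)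
          assume "u = v" "occ u"
          then consider "u \<in> E1" | w where "(u, w) \<in> E2" | w where "(w, u) \<in> E2"
            using occ_iff by blast
          then show ?thesis
          proof cases
            case 1 then show ?thesis using \<open>u = v\<close> \<open>occ u\<close> unfolding Rp_def same_def by blast
          next
            case 2 then show ?thesis using \<open>u = v\<close> \<open>occ u\<close> unfolding Rp_def same_def by force
          next
            case (3 w) then have "w \<in> Rp" unfolding Rp_def by force
            then show ?thesis using 3 \<open>u = v\<close> same_Rp by blast
          qed
        next
          assume "(u, v) \<in> E2"
          then have "u \<in> Rp" unfolding Rp_def by force
          then show ?thesis using \<open>(u, v) \<in> E2\<close> same_Rp by blast
        next
          assume "(v, u) \<in> E2"
          then have "v \<in> Rp" unfolding Rp_def by force
          then show ?thesis using \<open>(v, u) \<in> E2\<close> same_Rp by blast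
        qed
      qed
      then show "?A \<noteq> {}" by blast
    qed
    show ?thesis
    proof (cases "same u v")
      case True
      then obtain q where "q \<in> ?A" using ne by blast
      then have "?A = {q}" using one by blast
      then show ?thesis using True by simp
    next
      case False
      then show ?thesis using ne by simp
    qed
  qed
  finally show ?thesis .
qed

lemma exists_c0: "\<exists>c0. \<forall>u v. Gr c0 (card Rp) u v = of_bool (same u v)"
proof -
  obtain h where h: "bij_betw h {1..card Rp} Rp" using ex_bij_betw_nat_finite_1[OF finRp] by blast
  define c0 where "c0 p i j = (of_bool (same (h p) (i, j)) :: real)" for p i j
  have "Gr c0 (card Rp) u v = of_bool (same u v)" for u v
  proof -
    have "Gr c0 (card Rp) u v = (\<Sum>p\<in>{1..card Rp}. of_bool (same (h p) u) * of_bool (same (h p) v))"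
      unfolding Gr_def c0_def by simp
    also have "\<dots> = (\<Sum>q\<in>Rp. of_bool (same q u) * of_bool (same q v))"
      by (rule sum.reindex_bij_betw[OF h])
    also have "\<dots> = of_bool (same u v)" by (rule G0_sum)
    finally show ?thesis .
  qed
  then show ?thesis by blast
qed

end

lemma grid_iff: "(i, j) \<in> grid m n \<longleftrightarrow> i \<in> {1..m} \<and> j \<in> {1..n}"
  by (simp add: grid_def)

locale lw = cfg +
  fixes c0 :: "nat \<Rightarrow> nat \<Rightarrow> nat \<Rightarrow> real" and N :: nat
    and c :: "nat \<Rightarrow> nat \<Rightarrow> nat \<Rightarrow> real" and r :: nat
  assumes G0: "\<And>u v. Gr c0 N u v = of_bool (same u v)"
    and eq: "\<And>x y. SQ m n c0 N x y = SQ m n c r x y"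
begin

abbreviation G where "G \<equiv> Gr c r"

lemma Gsym: "G u v = G v u" unfolding Gr_def by (simp add: mult.commute)

lemma RD: assumes "(i, j) \<in> grid m n" shows "G (i,j) (i,j) = of_bool (same (i,j) (i,j))"
proof -
  have ij: "i \<in> {1..m}" "j \<in> {1..n}" using assms grid_iff by auto
  have "G (i,j) (i,j) = SQ m n c r (pt i i 0) (pt j j 0)" using SQ_diag[OF ij] by simp
  also have "\<dots> = SQ m n c0 N (pt i i 0) (pt j j 0)" using eq by simp
  also have "\<dots> = Gr c0 N (i,j) (i,j)" using SQ_diag[OF ij] by simp
  finally show ?thesis using G0 by simp
qed

lemma RR: assumes "(i, j) \<in> grid m n" "(i, l) \<in> grid m n" shows "G (i,j) (i,l) = of_bool (same (i,j) (i,l))"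
proof -
  have ij: "i \<in> {1..m}" "j \<in> {1..n}" "l \<in> {1..n}" using assms grid_iff by auto
  have "4 * G (i,j) (i,l) = SQ m n c r (pt i i 0) (pt j l 1) - SQ m n c r (pt i i 0) (pt j l (-1))"
    using SQ_row[OF ij] by simp
  also have "\<dots> = SQ m n c0 N (pt i i 0) (pt j l 1) - SQ m n c0 N (pt i i 0) (pt j l (-1))" using eq by simp
  also have "\<dots> = 4 * Gr c0 N (i,j) (i,l)" using SQ_row[OF ij] by simp
  finally show ?thesis using G0 by simp
qed

lemma RC: assumes "(i, j) \<in> grid m n" "(k, j) \<in> grid m n" shows "G (i,j) (k,j) = of_bool (same (i,j) (k,j))"
proof -
  have ij: "i \<in> {1..m}" "k \<in> {1..m}" "j \<in> {1..n}" using assms grid_iff by auto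
  have "4 * G (i,j) (k,j) = SQ m n c r (pt i k 1) (pt j j 0) - SQ m n c r (pt i k (-1)) (pt j j 0)"
    using SQ_col[OF ij] by simp
  also have "\<dots> = SQ m n c0 N (pt i k 1) (pt j j 0) - SQ m n c0 N (pt i k (-1)) (pt j j 0)" using eq by simp
  also have "\<dots> = 4 * Gr c0 N (i,j) (k,j)" using SQ_col[OF ij] by simp
  finally show ?thesis using G0 by simp
qed

lemma RX: assumes "(i, j) \<in> grid m n" "(k, l) \<in> grid m n"
  shows "G (i,j) (k,l) + G (k,j) (i,l) = of_bool (same (i,j) (k,l)) + of_bool (same (k,j) (i,l))"
proof -
  have ij: "i \<in> {1..m}" "k \<in> {1..m}" "j \<in> {1..n}" "l \<in> {1..n}" using assms grid_iff by auto
  have "8 * (G (i,j) (k,l) + G (k,j) (i,l)) = SQ m n c r (pt i k 1) (pt j l 1) - SQ m n c r (pt i k 1) (pt j l (-1))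
       - SQ m n c r (pt i k (-1)) (pt j l 1) + SQ m n c r (pt i k (-1)) (pt j l (-1))"
    using SQ_cross[OF ij] by simp
  also have "\<dots> = SQ m n c0 N (pt i k 1) (pt j l 1) - SQ m n c0 N (pt i k 1) (pt j l (-1))
       - SQ m n c0 N (pt i k (-1)) (pt j l 1) + SQ m n c0 N (pt i k (-1)) (pt j l (-1))" using eq by simp
  also have "\<dots> = 8 * (Gr c0 N (i,j) (k,l) + Gr c0 N (k,j) (i,l))" using SQ_cross[OF ij] by simp
  finally show ?thesis using G0 by simp
qed

lemma same_refl: "same u u \<longleftrightarrow> occ u"
  unfolding same_def using E2_neq by blast

lemma Gocc: "u \<in> grid m n \<Longrightarrow> G u u = of_bool (occ u)"
  using RD[of "fst u" "snd u"] same_refl by simp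

lemma zero: assumes "u \<in> grid m n" "\<not> occ u" "p \<in> {1..r}" shows "c p (fst u) (snd u) = 0"
proof -
  have "(\<Sum>p\<in>{1..r}. (c p (fst u) (snd u))\<^sup>2) = 0"
    using Gocc[OF assms(1)] assms(2) unfolding Gr_def by (simp add: power2_eq_square)
  then show ?thesis using assms(3) by (subst (asm) sum_nonneg_eq_0_iff) auto
qed

lemma Gzero: "u \<in> grid m n \<Longrightarrow> \<not> occ u \<Longrightarrow> G u v = 0"
  unfolding Gr_def using zero by (intro sum.neutral) auto

lemma Gzero': "v \<in> grid m n \<Longrightarrow> \<not> occ v \<Longrightarrow> G u v = 0"
  using Gzero Gsym by metis

lemma Gline: assumes "(i, j) \<in> grid m n" "(i, l) \<in> grid m n" "j \<noteq> l" shows "G (i,j) (i,l) = 0"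
proof -
  have "\<not> same (i,j) (i,l)" unfolding same_def
    using assms(3) E2_props(3)[of "(i,j)" "(i,l)"] E2_props(3)[of "(i,l)" "(i,j)"] by auto
  then show ?thesis using RR[OF assms(1,2)] by simp
qed

lemma Gcol: assumes "(i, j) \<in> grid m n" "(k, j) \<in> grid m n" "i \<noteq> k" shows "G (i,j) (k,j) = 0"
proof -
  have "\<not> same (i,j) (k,j)" unfolding same_def
    using assms(3) E2_props(4)[of "(i,j)" "(k,j)"] E2_props(4)[of "(k,j)" "(i,j)"] by auto
  then show ?thesis using RC[OF assms(1,2)] by simp
qed

lemma Gedge: assumes "(u, v) \<in> E2" shows "G u v = 1"
proof -
  obtain i j k l where uv: "u = (i,j)" "v = (k,l)" by (cases u, cases v) auto
  have g: "(i,j) \<in> grid m n" "(k,l) \<in> grid m n" using E2_props[OF assms] uv by auto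
  have ik: "i \<noteq> k" "j \<noteq> l" using E2_props[OF assms] uv by auto
  have gg: "(k,j) \<in> grid m n" "(i,l) \<in> grid m n" using g grid_iff by auto
  have e: "((i,j),(k,l)) \<in> E2" using assms uv by simp
  have n: "\<not> occ (i,l) \<or> \<not> occ (k,j)" using no2[OF e] by blast
  have ns: "\<not> same (k,j) (i,l)" using n same_occ by blast
  have s: "same (i,j) (k,l)" using e unfolding same_def by blast
  have "G (k,j) (i,l) = 0" using n Gzero[OF gg(1)] Gzero'[OF gg(2)] by blast
  then show ?thesis using RX[OF g] ns s uv by simp
qed

lemma Gvec: assumes "(u, v) \<in> E2" "p \<in> {1..r}" shows "c p (fst u) (snd u) = c p (fst v) (snd v)"
proof -
  have g: "u \<in> grid m n" "v \<in> grid m n" using E2_props[OF assms(1)] by auto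
  have "(\<Sum>p\<in>{1..r}. (c p (fst u) (snd u) - c p (fst v) (snd v))\<^sup>2) = G u u - 2 * G u v + G v v"
    unfolding Gr_def by (simp add: power2_diff sum_subtractf sum.distrib sum_distrib_left algebra_simps power2_eq_square)
  also have "\<dots> = 0" using Gocc[OF g(1)] Gocc[OF g(2)] Gedge[OF assms(1)] occ_fst[OF assms(1)] occ_snd[OF assms(1)] by simp
  finally have "(\<Sum>p\<in>{1..r}. (c p (fst u) (snd u) - c p (fst v) (snd v))\<^sup>2) = 0" .
  then show ?thesis using assms(2) by (subst (asm) sum_nonneg_eq_0_iff) auto
qed

lemma GeqE: "(u, v) \<in> E2 \<Longrightarrow> G u w = G v w"
  unfolding Gr_def by (intro sum.cong refl) (simp add: Gvec)

lemma A0: assumes "(i, j) \<in> grid m n" "(k, l) \<in> grid m n" "\<not> same (i,j) (k,l)"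
    "\<not> occ (k,j) \<or> \<not> occ (i,l)"
  shows "G (i,j) (k,l) = 0"
proof -
  have gg: "(k,j) \<in> grid m n" "(i,l) \<in> grid m n" using assms(1,2) grid_iff by auto
  have ns: "\<not> same (k,j) (i,l)" using assms(4) same_occ by blast
  have "G (k,j) (i,l) = 0" using assms(4) Gzero[OF gg(1)] Gzero'[OF gg(2)] by blast
  then show ?thesis using RX[OF assms(1,2)] ns assms(3) by simp
qed

lemma Bl: assumes ik: "i \<noteq> k" "j \<noteq> l" and o: "occ (i,j)" "occ (k,l)" "occ (i,l)" "occ (k,j)"
    and ed: "((i,l),Z) \<in> E2 \<or> (Z,(i,l)) \<in> E2" and ns: "\<not> same (i,l) (k,j)"
  shows "G (i,l) (k,j) = 0"
proof -
  obtain p q where Z: "Z = (p,q)" by (cases Z) auto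
  have hZ: "G (i,l) (k,j) = G (p,q) (k,j)"
    using ed
  proof
    assume "((i,l),Z) \<in> E2" then show ?thesis using GeqE[of "(i,l)" Z "(k,j)"] Z by simp
  next
    assume "(Z,(i,l)) \<in> E2" then show ?thesis using GeqE[of Z "(i,l)" "(k,j)"] Z by simp
  qed
  have Zp: "p \<noteq> i \<and> q \<noteq> l \<and> (p,q) \<in> grid m n"
    using ed
  proof
    assume "((i,l),Z) \<in> E2" then show ?thesis using E2_props[of "(i,l)" Z] Z by simp
  next
    assume "(Z,(i,l)) \<in> E2" then show ?thesis using E2_props[of Z "(i,l)"] Z by auto
  qed
  then have Zp: "p \<noteq> i" "q \<noteq> l" "(p,q) \<in> grid m n" by auto
  have Y: "(k,j) \<in> grid m n" using occ_grid o by blast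
  have ZY: "(p,q) \<noteq> (k,j)"
  proof
    assume "(p,q) = (k,j)"
    then have "((i,l),(k,j)) \<in> E2 \<or> ((k,j),(i,l)) \<in> E2" using ed Z by simp
    then show False using ns unfolding same_def by blast
  qed
  show ?thesis
  proof (cases "p = k")
    case True
    then have "q \<noteq> j" using ZY by simp
    then show ?thesis using hZ Gline[of k q j] Zp Y True by simp
  next
    case pk: False
    show ?thesis
    proof (cases "q = j")
      case True
      then show ?thesis using hZ Gcol[of p j k] Zp Y pk by simp
    next
      case qj: False
      have nsZ: "\<not> same (p,q) (k,j)"
      proof
        assume "same (p,q) (k,j)"
        then have "((p,q),(k,j)) \<in> E2 \<or> ((k,j),(p,q)) \<in> E2" using ZY unfolding same_def by blast
        then show False
        proof
          assume a: "((p,q),(k,j)) \<in> E2"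
          from ed show False
          proof
            assume "((i,l),Z) \<in> E2" then show False using uniq3[of "(i,l)" "(p,q)" "(k,j)"] a Z by simp
          next
            assume "(Z,(i,l)) \<in> E2" then have "(k,j) = (i,l)" using uniq1[of "(p,q)" "(k,j)" "(i,l)"] a Z by simp
            then show False using ik by simp
          qed
        next
          assume a: "((k,j),(p,q)) \<in> E2"
          from ed show False
          proof
            assume "((i,l),Z) \<in> E2" then have "(k,j) = (i,l)" using uniq2[of "(k,j)" "(p,q)" "(i,l)"] a Z by simp
            then show False using ik by simp
          next
            assume "(Z,(i,l)) \<in> E2" then show False using uniq4[of "(p,q)" "(i,l)" "(k,j)"] a Z by simp
          qed
        qed
      qed
      have "\<not> (occ (p,j) \<and> occ (k,q))"
      proof
        assume oc: "occ (p,j) \<and> occ (k,q)"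
        have d: "distinct [(k,j),(k,l),(k,q),(i,j),(p,j)]" "distinct [(k,j),(k,q),(k,l),(p,j),(i,j)]"
          using ik Zp pk qj by auto
        from ed show False
        proof
          assume "((i,l),Z) \<in> E2"
          then have "((i,l),(p,q)) \<in> E2" using Z by simp
          from no3[OF this d(1)] show False using o oc by blast
        next
          assume "(Z,(i,l)) \<in> E2"
          then have "((p,q),(i,l)) \<in> E2" using Z by simp
          from no3[OF this d(2)] show False using o oc by blast
        qed
      qed
      then have "G (p,q) (k,j) = 0" using A0[OF Zp(3) Y nsZ] by blast
      then show ?thesis using hZ by simp
    qed
  qed
qed

lemma Aa: assumes ik: "i \<noteq> k" "j \<noteq> l" and o: "occ (i,j)" "occ (k,l)" and ns: "\<not> same (i,j) (k,l)"
  shows "G (i,j) (k,l) = 0"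
proof -
  have g: "(i,j) \<in> grid m n" "(k,l) \<in> grid m n" using o occ_grid by auto
  show ?thesis
  proof (cases "occ (k,j) \<and> occ (i,l)")
    case False
    then show ?thesis using A0[OF g ns] by blast
  next
    case True
    have ns2: "\<not> same (k,j) (i,l)"
    proof
      assume "same (k,j) (i,l)"
      then have "((k,j),(i,l)) \<in> E2 \<or> ((i,l),(k,j)) \<in> E2" using ik unfolding same_def by auto
      then show False using no2[of k j i l] no2[of i l k j] o by blast
    qed
    have rel: "G (i,j) (k,l) = - G (k,j) (i,l)" using RX[OF g] ns ns2 by simp
    have "\<not> ((i,j) \<in> E1 \<and> (i,l) \<in> E1 \<and> (k,j) \<in> E1 \<and> (k,l) \<in> E1)"
      using c4 ik unfolding C4_free_def by blast
    then consider "(i,l) \<notin> E1" | "(k,j) \<notin> E1" | "(i,j) \<notin> E1" | "(k,l) \<notin> E1" by blast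
    then show ?thesis
    proof cases
      case 1
      then obtain Z where "((i,l),Z) \<in> E2 \<or> (Z,(i,l)) \<in> E2" using True occ_iff by blast
      from Bl[OF ik o True[THEN conjunct2] True[THEN conjunct1] this] ns2 same_sym
      have "G (i,l) (k,j) = 0" by blast
      then show ?thesis using rel Gsym[of "(i,l)" "(k,j)"] by simp
    next
      case 2
      then obtain Z where "((k,j),Z) \<in> E2 \<or> (Z,(k,j)) \<in> E2" using True occ_iff by blast
      from Bl[of k i l j, OF ik(1)[symmetric] ik(2)[symmetric] o(2) o(1) True[THEN conjunct1] True[THEN conjunct2] this] ns2
      have "G (k,j) (i,l) = 0" by blast
      then show ?thesis using rel by simp
    next
      case 3
      then obtain Z where "((i,j),Z) \<in> E2 \<or> (Z,(i,j)) \<in> E2" using o occ_iff by blast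
      from Bl[of i k l j, OF ik(1) ik(2)[symmetric] True[THEN conjunct2] True[THEN conjunct1] o(1) o(2) this] ns
      show ?thesis by blast
    next
      case 4
      then obtain Z where "((k,l),Z) \<in> E2 \<or> (Z,(k,l)) \<in> E2" using o occ_iff by blast
      from Bl[of k i j l, OF ik(1)[symmetric] ik(2) True[THEN conjunct1] True[THEN conjunct2] o(2) o(1) this] ns same_sym
      have "G (k,l) (i,j) = 0" by blast
      then show ?thesis using Gsym[of "(k,l)" "(i,j)"] by simp
    qed
  qed
qed

lemma F3: assumes "q \<in> Rp" "q' \<in> Rp" "q \<noteq> q'" shows "G q q' = 0"
proof -
  have ns: "\<not> same q q'" using same_Rp[OF assms(1), of q'] snd_notRp[of q q'] assms(2,3) by auto
  obtain i j k l where qq: "q = (i,j)" "q' = (k,l)" by (cases q, cases q') auto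
  have o: "occ (i,j)" "occ (k,l)" using Rp_occ assms qq by auto
  have g: "(i,j) \<in> grid m n" "(k,l) \<in> grid m n" using o occ_grid by auto
  show ?thesis
  proof (cases "i = k")
    case True
    then have "j \<noteq> l" using assms(3) qq by simp
    then show ?thesis using Gline[of i j l] g True qq by simp
  next
    case ik: False
    show ?thesis
    proof (cases "j = l")
      case True
      then show ?thesis using Gcol[of i j k] g ik qq by simp
    next
      case False
      then show ?thesis using Aa[OF ik False o] ns qq by simp
    qed
  qed
qed

lemma card_le: "card Rp \<le> r"
proof (rule ortho_card[OF finRp, of "\<lambda>q p. c p (fst q) (snd q)"])
  fix q q' assume "q \<in> Rp" "q' \<in> Rp"
  then show "(\<Sum>p\<in>{1..r}. c p (fst q) (snd q) * c p (fst q') (snd q')) = (if q = q' then 1 else 0)"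
    using F3 Gocc Rp_occ occ_grid unfolding Gr_def[symmetric] by auto
qed

end

lemma card_E1_le: "E1 \<subseteq> grid m n \<Longrightarrow> card E1 \<le> m * n"
  using card_mono[OF finite_grid] card_grid by metis

lemma config_bound:
  assumes "double_config m n E1 E2"
  shows "card E1 + card E2 \<le> m * n + m * n * (m * n)"
proof -
  have "E1 \<subseteq> grid m n" using assms unfolding double_config_def by blast
  then have 1: "card E1 \<le> m * n" by (rule card_E1_le)
  have "E2 \<subseteq> grid m n \<times> grid m n"
  proof
    fix e assume "e \<in> E2"
    then show "e \<in> grid m n \<times> grid m n"
      using assms unfolding double_config_def by (cases e) auto
  qed
  then have "card E2 \<le> card (grid m n \<times> grid m n)"
    by (intro card_mono) (simp_all add: finite_grid)
  then have 2: "card E2 \<le> m * n * (m * n)" by (simp add: card_cartesian_product card_grid)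
  from 1 2 show ?thesis by simp
qed

lemma empty_config: "E \<subseteq> grid m n \<Longrightarrow> C4_free E \<Longrightarrow>
   double_config m n E {} \<and> simple_config E {} \<and> \<not> has_gen_C4 E {}"
  unfolding double_config_def simple_config_def has_gen_C4_def by simp

theorem theorem2p2:
  fixes m n :: nat
  assumes "m \<ge> 2" and "n \<ge> 2"
  shows "BSR m n \<ge> zaran2 m n \<and> zaran2 m n \<ge> zaran m n"
proof -
  let ?Z2 = "{card E1 + card E2 | E1 E2.
      double_config m n E1 E2 \<and> simple_config E1 E2 \<and> \<not> has_gen_C4 E1 E2}"
  let ?Z = "{card E | E. E \<subseteq> grid m n \<and> C4_free E}"
  have fin2: "finite ?Z2"
    by (rule finite_subset[of _ "{..m * n + m * n * (m * n)}"]) (auto dest: config_bound)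
  have ne2: "?Z2 \<noteq> {}"
  proof -
    have "card ({} :: (nat \<times> nat) set) + card ({} :: ((nat \<times> nat) \<times> (nat \<times> nat)) set) \<in> ?Z2"
      using empty_config[of "{}" m n] unfolding C4_free_def by blast
    then show ?thesis by blast
  qed
  have fin1: "finite ?Z"
    by (rule finite_subset[of _ "{..m * n}"]) (auto dest: card_E1_le)
  have ne1: "?Z \<noteq> {}"
  proof -
    have "card ({} :: (nat \<times> nat) set) \<in> ?Z" unfolding C4_free_def by blast
    then show ?thesis by blast
  qed
  have part2: "zaran2 m n \<ge> zaran m n"
  proof -
    have "zaran m n \<in> ?Z" unfolding zaran_def using Max_in[OF fin1 ne1] .
    then obtain E where E: "E \<subseteq> grid m n" "C4_free E" "zaran m n = card E" by blast
    then have "card E + card ({} :: ((nat \<times> nat) \<times> (nat \<times> nat)) set) \<in> ?Z2"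
      using empty_config[OF E(1,2)] by blast
    then have "card E \<le> Max ?Z2" using Max_ge[OF fin2] by simp
    then show ?thesis using E(3) unfolding zaran2_def by simp
  qed
  have part1: "BSR m n \<ge> zaran2 m n"
  proof -
    have "zaran2 m n \<in> ?Z2" unfolding zaran2_def using Max_in[OF fin2 ne2] .
    then obtain E1 E2 where EE: "double_config m n E1 E2" "simple_config E1 E2" "\<not> has_gen_C4 E1 E2"
      and zz: "zaran2 m n = card E1 + card E2" by blast
    interpret cfg m n E1 E2 using EE by unfold_locales
    obtain c0 where c0: "\<And>u v. Gr c0 (card Rp) u v = of_bool (same u v)" using exists_c0 by blast
    define a0 where "a0 = gram_arr c0 (card Rp)"
    have sw: "sos_with m n a0 (card Rp)" unfolding a0_def by (rule sos_with_gram)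
    then have iss: "is_sos m n a0" unfolding is_sos_def by blast
    have "sos_with m n a0 (sos_rank m n a0)" unfolding sos_rank_def using sw by (rule LeastI)
    then obtain c where c: "\<forall>x y. biquad m n a0 x y = (\<Sum>p\<in>{1..sos_rank m n a0}. (bilin m n (c p) x y)\<^sup>2)"
      unfolding sos_with_def by blast
    have eqSQ: "SQ m n c0 (card Rp) x y = SQ m n c (sos_rank m n a0) x y" for x y
      using c biquad_gram[of m n c0 "card Rp" x y] unfolding SQ_def a0_def by simp
    interpret lw m n E1 E2 c0 "card Rp" c "sos_rank m n a0"
      by unfold_locales (use c0 eqSQ in auto)
    have "card Rp \<le> sos_rank m n a0" by (rule card_le)
    also have "\<dots> \<le> BSR m n" by (rule BSR_ge[OF iss])
    finally show ?thesis using zz card_Rp by simp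
  qed
  from part1 part2 show ?thesis by blast
qed

end
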